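(* Let $R$ be a commutative graded ring, $P$ a homogeneous prime ideal, $S=h(R\setminus P)$ and $M$ a graded $R$-module. Then $(S^{-1}M)_0=0$ if and only if $\mathrm{Hom}_{Gr(R)}(M,E^g(R/P))=0$.
   Context: $h(R\setminus P)$ is the set of homogeneous elements of $R$ not in $P$; $S^{-1}M$ is the graded localisation and $(S^{-1}M)_0$ its degree-zero component. $Gr(R)$ is the category of graded $R$-modules with degree-preserving maps and $E^g$ the injective envelope in $Gr(R)$. *)

theory Defs
  imports "HOL-Algebra.Algebra"
begin

definition graded_decomp :: "('a, 'b) ring_scheme \<Rightarrow> (int \<Rightarrow> 'a set) \<Rightarrow> bool" where
  "graded_decomp G Gr \<longleftrightarrow>
     (\<forall>n. additive_subgroup (Gr n) G) \<and>
     (\<forall>x \<in> carrier G. \<exists>!f. (\<forall>n. f n \<in> Gr n) \<and> finite {n. f n \<noteq> \<zero>\<^bsub>G\<^esub>}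
                          \<and> x = finsum G f {n. f n \<noteq> \<zero>\<^bsub>G\<^esub>})"

definition graded_ring :: "'r ring \<Rightarrow> (int \<Rightarrow> 'r set) \<Rightarrow> bool" where
  "graded_ring R Rg \<longleftrightarrow> cring R \<and> graded_decomp R Rg \<and>
     (\<forall>i j. \<forall>a \<in> Rg i. \<forall>b \<in> Rg j. a \<otimes>\<^bsub>R\<^esub> b \<in> Rg (i + j))"

definition graded_module ::
  "'r ring \<Rightarrow> (int \<Rightarrow> 'r set) \<Rightarrow> ('r, 'm) module \<Rightarrow> (int \<Rightarrow> 'm set) \<Rightarrow> bool" where
  "graded_module R Rg M Mg \<longleftrightarrow> graded_ring R Rg \<and> module R M \<and> graded_decomp M Mg \<and>
     (\<forall>i j. \<forall>a \<in> Rg i. \<forall>x \<in> Mg j. a \<odot>\<^bsub>M\<^esub> x \<in> Mg (i + j))"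

definition homogeneous :: "(int \<Rightarrow> 'a set) \<Rightarrow> 'a \<Rightarrow> bool" where
  "homogeneous Gr x \<longleftrightarrow> (\<exists>n. x \<in> Gr n)"

definition graded_subset :: "('a, 'b) ring_scheme \<Rightarrow> (int \<Rightarrow> 'a set) \<Rightarrow> 'a set \<Rightarrow> bool" where
  "graded_subset G Gr H \<longleftrightarrow>
     (\<forall>x \<in> H. \<forall>f. (\<forall>n. f n \<in> Gr n) \<and> finite {n. f n \<noteq> \<zero>\<^bsub>G\<^esub>}
                   \<and> x = finsum G f {n. f n \<noteq> \<zero>\<^bsub>G\<^esub>} \<longrightarrow> (\<forall>n. f n \<in> H))"

definition hS :: "'r ring \<Rightarrow> (int \<Rightarrow> 'r set) \<Rightarrow> 'r set \<Rightarrow> 'r set" where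
  "hS R Rg P = {s \<in> carrier R. homogeneous Rg s \<and> s \<notin> P}"

definition loc_rel :: "'r ring \<Rightarrow> ('r, 'm) module \<Rightarrow> 'r set \<Rightarrow> (('m \<times> 'r) \<times> ('m \<times> 'r)) set" where
  "loc_rel R M S = {((m, s), (m', s')). m \<in> carrier M \<and> m' \<in> carrier M \<and> s \<in> S \<and> s' \<in> S \<and>
      (\<exists>t \<in> S. t \<odot>\<^bsub>M\<^esub> ((s' \<odot>\<^bsub>M\<^esub> m) \<ominus>\<^bsub>M\<^esub> (s \<odot>\<^bsub>M\<^esub> m')) = \<zero>\<^bsub>M\<^esub>)}"

text \<open>The fraction m/s as an element of S^{-1}M = (M x S)/~.\<close>
definition loc_class :: "'r ring \<Rightarrow> ('r, 'm) module \<Rightarrow> 'r set \<Rightarrow> 'm \<Rightarrow> 'r \<Rightarrow> ('m \<times> 'r) set" where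
  "loc_class R M S m s = loc_rel R M S `` {(m, s)}"

definition loc_deg :: "'r ring \<Rightarrow> (int \<Rightarrow> 'r set) \<Rightarrow> ('r, 'm) module \<Rightarrow> (int \<Rightarrow> 'm set)
     \<Rightarrow> 'r set \<Rightarrow> int \<Rightarrow> ('m \<times> 'r) set set" where
  "loc_deg R Rg M Mg S d =
     {loc_class R M S m s | m s n. m \<in> Mg (d + n) \<and> s \<in> S \<and> s \<in> Rg n}"

definition gr_hom :: "'r ring \<Rightarrow> ('r, 'a) module \<Rightarrow> (int \<Rightarrow> 'a set)
     \<Rightarrow> ('r, 'b) module \<Rightarrow> (int \<Rightarrow> 'b set) \<Rightarrow> ('a \<Rightarrow> 'b) \<Rightarrow> bool" where
  "gr_hom R A Ag B Bg f \<longleftrightarrow>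
     f \<in> carrier A \<rightarrow> carrier B \<and>
     (\<forall>x \<in> carrier A. \<forall>y \<in> carrier A. f (x \<oplus>\<^bsub>A\<^esub> y) = f x \<oplus>\<^bsub>B\<^esub> f y) \<and>
     (\<forall>r \<in> carrier R. \<forall>x \<in> carrier A. f (r \<odot>\<^bsub>A\<^esub> x) = r \<odot>\<^bsub>B\<^esub> f x) \<and>
     (\<forall>n. f ` Ag n \<subseteq> Bg n)"

text \<open>Injective objects of Gr(R). HOL cannot quantify over all types inside a formula,
  so the test modules range over all graded R-modules whose carrier lives in the type 'x.\<close>
definition gr_injective :: "'x itself \<Rightarrow> 'r ring \<Rightarrow> (int \<Rightarrow> 'r set)
     \<Rightarrow> ('r, 'e) module \<Rightarrow> (int \<Rightarrow> 'e set) \<Rightarrow> bool" where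
  "gr_injective T R Rg E Eg \<longleftrightarrow> graded_module R Rg E Eg \<and>
     (\<forall>(A :: ('r, 'x) module) Ag (B :: ('r, 'x) module) Bg u g.
        graded_module R Rg A Ag \<and> graded_module R Rg B Bg \<and>
        gr_hom R A Ag B Bg u \<and> inj_on u (carrier A) \<and> gr_hom R A Ag E Eg g \<longrightarrow>
        (\<exists>h. gr_hom R B Bg E Eg h \<and> (\<forall>x \<in> carrier A. h (u x) = g x)))"

definition gr_essential :: "'r ring \<Rightarrow> ('r, 'e) module \<Rightarrow> (int \<Rightarrow> 'e set) \<Rightarrow> 'e set \<Rightarrow> bool" where
  "gr_essential R E Eg N \<longleftrightarrow>
     (\<forall>H. submodule H R E \<and> graded_subset E Eg H \<and> H \<inter> N = {\<zero>\<^bsub>E\<^esub>} \<longrightarrow> H = {\<zero>\<^bsub>E\<^esub>})"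

definition gr_injective_envelope :: "'x itself \<Rightarrow> 'r ring \<Rightarrow> (int \<Rightarrow> 'r set)
     \<Rightarrow> ('r, 'q) module \<Rightarrow> (int \<Rightarrow> 'q set) \<Rightarrow> ('r, 'e) module \<Rightarrow> (int \<Rightarrow> 'e set)
     \<Rightarrow> ('q \<Rightarrow> 'e) \<Rightarrow> bool" where
  "gr_injective_envelope T R Rg Q Qg E Eg i \<longleftrightarrow>
     gr_hom R Q Qg E Eg i \<and> inj_on i (carrier Q) \<and> gr_injective T R Rg E Eg \<and>
     gr_essential R E Eg (i ` carrier Q)"

definition quot_module :: "'r ring \<Rightarrow> 'r set \<Rightarrow> ('r, 'r set) module" where
  "quot_module R I =
     \<lparr>partial_object.carrier = carrier (R Quot I), Group.monoid.mult = rcoset_mult R I, Group.monoid.one = a_r_coset R I \<one>\<^bsub>R\<^esub>,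
      Ring.ring.zero = I, Ring.ring.add = set_add R, Module.module.smult = (\<lambda>a Y. rcoset_mult R I (a_r_coset R I a) Y)\<rparr>"

definition quot_grading :: "'r ring \<Rightarrow> (int \<Rightarrow> 'r set) \<Rightarrow> 'r set \<Rightarrow> int \<Rightarrow> 'r set set" where
  "quot_grading R Rg I n = {a_r_coset R I r | r. r \<in> Rg n}"

end

theory Submission
  imports Defs
begin


lemma gd_sub: "graded_decomp G Gr \<Longrightarrow> Gr n \<subseteq> carrier G"
  unfolding graded_decomp_def using additive_subgroup.a_subset by blast

lemma gd_zero: "graded_decomp G Gr \<Longrightarrow> \<zero>\<^bsub>G\<^esub> \<in> Gr n"
  unfolding graded_decomp_def using additive_subgroup.zero_closed by blast

lemma gd_exists:
  assumes "graded_decomp G Gr" "x \<in> carrier G"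
  shows "\<exists>f F. finite F \<and> (\<forall>n. f n \<in> Gr n) \<and> (\<forall>n. n \<notin> F \<longrightarrow> f n = \<zero>\<^bsub>G\<^esub>) \<and> x = finsum G f F"
proof -
  from assms obtain f where "(\<forall>n. f n \<in> Gr n)" "finite {n. f n \<noteq> \<zero>\<^bsub>G\<^esub>}"
     "x = finsum G f {n. f n \<noteq> \<zero>\<^bsub>G\<^esub>}" unfolding graded_decomp_def by blast
  then show ?thesis by blast
qed

lemma gd_unique:
  assumes G: "abelian_group G" and gd: "graded_decomp G Gr" and fin: "finite F"
    and f: "\<And>n. f n \<in> Gr n" and g: "\<And>n. g n \<in> Gr n"
    and f0: "\<And>n. n \<notin> F \<Longrightarrow> f n = \<zero>\<^bsub>G\<^esub>" and g0: "\<And>n. n \<notin> F \<Longrightarrow> g n = \<zero>\<^bsub>G\<^esub>"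
    and eq: "finsum G f F = finsum G g F"
  shows "f = g"
proof -
  interpret abelian_group G by fact
  have fc: "f n \<in> carrier G" for n using f gd_sub[OF gd] by blast
  have gc: "g n \<in> carrier G" for n using g gd_sub[OF gd] by blast
  let ?x = "finsum G f F"
  have xc: "?x \<in> carrier G" using fc by (simp add: Pi_def)
  have sf: "{n. f n \<noteq> \<zero>\<^bsub>G\<^esub>} \<subseteq> F" using f0 by blast
  have sg: "{n. g n \<noteq> \<zero>\<^bsub>G\<^esub>} \<subseteq> F" using g0 by blast
  have ff: "finite {n. f n \<noteq> \<zero>\<^bsub>G\<^esub>}" using sf fin finite_subset by blast
  have fg: "finite {n. g n \<noteq> \<zero>\<^bsub>G\<^esub>}" using sg fin finite_subset by blast
  have e1: "?x = finsum G f {n. f n \<noteq> \<zero>\<^bsub>G\<^esub>}"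
    by (rule add.finprod_mono_neutral_cong_right) (use fin sf fc in auto)
  have e2: "?x = finsum G g {n. g n \<noteq> \<zero>\<^bsub>G\<^esub>}"
    unfolding eq by (rule add.finprod_mono_neutral_cong_right) (use fin sg gc in auto)
  define Q where "Q = (\<lambda>f'. (\<forall>n. f' n \<in> Gr n) \<and> finite {n. f' n \<noteq> \<zero>\<^bsub>G\<^esub>}
      \<and> ?x = finsum G f' {n. f' n \<noteq> \<zero>\<^bsub>G\<^esub>})"
  have ex: "\<exists>!f'. Q f'" using gd xc unfolding graded_decomp_def Q_def by blast
  have Qf: "Q f" unfolding Q_def using f ff e1 by blast
  have Qg: "Q g" unfolding Q_def using g fg e2 by blast
  show ?thesis using ex Qf Qg by blast
qed

lemma gd_shift:
  assumes G: "abelian_group G" and gd: "graded_decomp G Gr" and fin: "finite F"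
    and f: "\<And>j. j \<in> F \<Longrightarrow> f j \<in> Gr (j + d)"
    and fin': "finite F'" and c: "\<And>n. c n \<in> Gr n" and c0: "\<And>n. n \<notin> F' \<Longrightarrow> c n = \<zero>\<^bsub>G\<^esub>"
    and eq: "finsum G c F' = finsum G f F"
  shows "c = (\<lambda>n. if n - d \<in> F then f (n - d) else \<zero>\<^bsub>G\<^esub>)"
proof -
  interpret abelian_group G by fact
  define g where "g = (\<lambda>n. if n - d \<in> F then f (n - d) else \<zero>\<^bsub>G\<^esub>)"
  have g: "g n \<in> Gr n" for n using f[of "n-d"] gd_zero[OF gd] by (auto simp: g_def)
  have gc: "g n \<in> carrier G" for n using g gd_sub[OF gd] by blast
  have cc: "c n \<in> carrier G" for n using c gd_sub[OF gd] by blast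
  have fc: "j \<in> F \<Longrightarrow> f j \<in> carrier G" for j using f gd_sub[OF gd] by blast
  have inj: "inj_on (\<lambda>j. j + d) F" by (auto simp: inj_on_def)
  have "finsum G g ((\<lambda>j. j + d) ` F) = finsum G (\<lambda>j. g (j + d)) F"
    by (rule finsum_reindex) (use gc inj in auto)
  also have "\<dots> = finsum G f F" by (rule finsum_cong') (auto simp: g_def Pi_def fc)
  finally have e: "finsum G g ((\<lambda>j. j + d) ` F) = finsum G f F" .
  let ?I = "(\<lambda>j. j + d) ` F"
  let ?U = "F' \<union> ?I"
  have gz: "g n = \<zero>\<^bsub>G\<^esub>" if n: "n \<notin> ?I" for n
  proof -
    have "n - d \<notin> F"
    proof
      assume "n - d \<in> F"
      then have "(n - d) + d \<in> ?I" by (rule imageI)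
      then show False using n by simp
    qed
    then show ?thesis by (simp add: g_def)
  qed
  have finU: "finite ?U" using fin fin' by blast
  have e1: "finsum G c ?U = finsum G c F'"
    by (rule add.finprod_mono_neutral_cong_right) (use finU c0 cc in auto)
  have e2: "finsum G g ?U = finsum G g ?I"
    by (rule add.finprod_mono_neutral_cong_right) (use finU gz gc in auto)
  have e3: "finsum G c ?U = finsum G g ?U" using e1 e2 e eq by simp
  have cz: "n \<notin> ?U \<Longrightarrow> c n = \<zero>\<^bsub>G\<^esub>" for n using c0 by blast
  have gz': "n \<notin> ?U \<Longrightarrow> g n = \<zero>\<^bsub>G\<^esub>" for n using gz by blast
  have "c = g" by (rule gd_unique[OF G gd finU c g cz gz' e3])
  then show ?thesis by (simp add: g_def)
qed



lemma gr_cring: "graded_ring R Rg \<Longrightarrow> cring R" by (simp add: graded_ring_def)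
lemma gr_gd: "graded_ring R Rg \<Longrightarrow> graded_decomp R Rg" by (simp add: graded_ring_def)
lemma gr_mult: "graded_ring R Rg \<Longrightarrow> a \<in> Rg i \<Longrightarrow> b \<in> Rg j \<Longrightarrow> a \<otimes>\<^bsub>R\<^esub> b \<in> Rg (i + j)"
  by (simp add: graded_ring_def)

lemma one_deg0:
  fixes R (structure)
  assumes gr: "graded_ring R Rg"
  shows "\<one>\<^bsub>R\<^esub> \<in> Rg 0"
proof -
  interpret cring R using gr_cring[OF gr] .
  have gd: "graded_decomp R Rg" using gr_gd[OF gr] .
  have AG: "abelian_group R" by (simp add: abelian_group_axioms)
  have sub: "Rg n \<subseteq> carrier R" for n using gd_sub[OF gd] .
  obtain e F where fin: "finite F" and e: "\<And>n. e n \<in> Rg n" and e0: "\<And>n. n \<notin> F \<Longrightarrow> e n = \<zero>"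
    and one: "\<one> = finsum R e F" using gd_exists[OF gd one_closed] by blast
  have ec: "e n \<in> carrier R" for n using e sub by blast
  have key: "(\<forall>m. m \<noteq> 0 \<longrightarrow> x \<otimes> e m = \<zero>) \<and> x \<otimes> e 0 = x" if x: "x \<in> Rg k" for x k
  proof -
    have xc: "x \<in> carrier R" using x sub by blast
    have "x = x \<otimes> finsum R e F" using one xc by (metis r_one)
    also have "\<dots> = finsum R (\<lambda>j. x \<otimes> e j) F" by (rule finsum_rdistr) (use fin xc ec in auto)
    finally have eqx: "x = finsum R (\<lambda>j. x \<otimes> e j) F" .
    define c where "c = (\<lambda>n. if n = k then x else \<zero>)"
    have cs: "finsum R c {k} = x" using xc by (simp add: c_def)
    have "c = (\<lambda>n. if n - k \<in> F then x \<otimes> e (n - k) else \<zero>)"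
    proof (rule gd_shift[OF AG gd fin _ _ _ _])
      show "\<And>j. j \<in> F \<Longrightarrow> x \<otimes> e j \<in> Rg (j + k)" using gr_mult[OF gr x e] by (simp add: add.commute)
      show "c n \<in> Rg n" for n using x gd_zero[OF gd] by (simp add: c_def)
      show "\<And>n. n \<notin> {k} \<Longrightarrow> c n = \<zero>" by (simp add: c_def)
      show "finsum R c {k} = finsum R (\<lambda>j. x \<otimes> e j) F" using cs eqx by simp
    qed simp
    then have cc: "\<And>n. c n = (if n - k \<in> F then x \<otimes> e (n - k) else \<zero>)" by metis
    have 1: "x \<otimes> e m = \<zero>" if "m \<noteq> 0" for m
    proof (cases "m \<in> F")
      case True then show ?thesis using cc[of "m + k"] that by (simp add: c_def)
    next
      case False then show ?thesis using e0 xc by simp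
    qed
    have 2: "x \<otimes> e 0 = x"
    proof (cases "0 \<in> F")
      case True then show ?thesis using cc[of k] by (simp add: c_def)
    next
      case False then show ?thesis using cc[of k] e0 xc by (simp add: c_def)
    qed
    show ?thesis using 1 2 by blast
  qed
  have ez: "e m = \<zero>" if "m \<noteq> 0" for m
  proof -
    have "e m = e m \<otimes> e 0" using key[OF e[of m]] by simp
    also have "\<dots> = e 0 \<otimes> e m" using ec m_comm by blast
    also have "\<dots> = \<zero>" using key[OF e[of 0]] that by blast
    finally show ?thesis .
  qed
  show ?thesis
  proof (cases "0 \<in> F")
    case True
    have "finsum R e F = finsum R (\<lambda>j. if j = 0 then e j else \<zero>) F"
      by (rule finsum_cong') (use ec ez in auto)
    also have "\<dots> = e 0" by (rule add.finprod_singleton_swap) (use True fin ec in auto)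
    finally have "\<one> = e 0" using one by (rule trans[rotated])
    then show ?thesis using e[of 0] by (rule ssubst)
  next
    case False
    have ejz: "j \<in> F \<Longrightarrow> e j = \<zero>" for j using ez False by (cases "j = 0") auto
    have "finsum R e F = finsum R (\<lambda>j. \<zero>) F"
      by (rule finsum_cong') (use ejz in auto)
    also have "\<dots> = \<zero>" by (rule finsum_zero)
    finally have "\<one> = \<zero>" using one by (rule trans[rotated])
    then show ?thesis using gd_zero[OF gd] by (rule ssubst)
  qed
qed



lemma gm_module: "graded_module R Rg M Mg \<Longrightarrow> module R M" by (simp add: graded_module_def)
lemma gm_gd: "graded_module R Rg M Mg \<Longrightarrow> graded_decomp M Mg" by (simp add: graded_module_def)
lemma gm_gr: "graded_module R Rg M Mg \<Longrightarrow> graded_ring R Rg" by (simp add: graded_module_def)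
lemma gm_smult: "graded_module R Rg M Mg \<Longrightarrow> a \<in> Rg i \<Longrightarrow> x \<in> Mg j \<Longrightarrow> a \<odot>\<^bsub>M\<^esub> x \<in> Mg (i + j)"
  by (simp add: graded_module_def)

lemma (in module) finsum_smult_rdistr:
  "\<lbrakk> finite A; f: A \<rightarrow> carrier R; x \<in> carrier M \<rbrakk> \<Longrightarrow>
     (finsum R f A) \<odot>\<^bsub>M\<^esub> x = finsum M (\<lambda>i. f i \<odot>\<^bsub>M\<^esub> x) A"
proof (induct set: finite)
  case empty then show ?case by simp
next
  case (insert a F) then show ?case by (simp add: Pi_def smult_l_distr)
qed

lemma smult_decomp:
  assumes gm: "graded_module R Rg M Mg" and fin: "finite F" and rho: "\<And>j. \<rho> j \<in> Rg j"
    and y: "y \<in> Mg n" and fin': "finite F'" and c: "\<And>n. c n \<in> Mg n"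
    and c0: "\<And>n. n \<notin> F' \<Longrightarrow> c n = \<zero>\<^bsub>M\<^esub>"
    and eq: "finsum M c F' = finsum R \<rho> F \<odot>\<^bsub>M\<^esub> y"
  shows "c = (\<lambda>m. if m - n \<in> F then \<rho> (m - n) \<odot>\<^bsub>M\<^esub> y else \<zero>\<^bsub>M\<^esub>)"
proof -
  interpret module R M using gm_module[OF gm] .
  have AG: "abelian_group M" by (simp add: abelian_group_axioms)
  have gdR: "graded_decomp R Rg" using gr_gd[OF gm_gr[OF gm]] .
  have gd: "graded_decomp M Mg" using gm_gd[OF gm] .
  have rc: "\<rho> j \<in> carrier R" for j using rho gd_sub[OF gdR] by blast
  have yc: "y \<in> carrier M" using y gd_sub[OF gd] by blast
  have "finsum R \<rho> F \<odot>\<^bsub>M\<^esub> y = finsum M (\<lambda>j. \<rho> j \<odot>\<^bsub>M\<^esub> y) F"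
    by (rule finsum_smult_rdistr) (use fin rc yc in auto)
  then show ?thesis
    using gd_shift[OF AG gd fin _ fin' c c0, of "\<lambda>j. \<rho> j \<odot>\<^bsub>M\<^esub> y" n] eq gm_smult[OF gm rho y] by simp
qed

lemma hom_zero:
  assumes "abelian_group A" "abelian_group B" "h \<in> carrier A \<rightarrow> carrier B"
    "\<forall>x \<in> carrier A. \<forall>y \<in> carrier A. h (x \<oplus>\<^bsub>A\<^esub> y) = h x \<oplus>\<^bsub>B\<^esub> h y"
  shows "h \<zero>\<^bsub>A\<^esub> = \<zero>\<^bsub>B\<^esub>"
proof -
  interpret A: abelian_group A by fact
  interpret B: abelian_group B by fact
  have c: "h \<zero>\<^bsub>A\<^esub> \<in> carrier B" using assms(3) by blast
  have "h \<zero>\<^bsub>A\<^esub> \<oplus>\<^bsub>B\<^esub> h \<zero>\<^bsub>A\<^esub> = h \<zero>\<^bsub>A\<^esub> \<oplus>\<^bsub>B\<^esub> \<zero>\<^bsub>B\<^esub>"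
  proof -
    have "h \<zero>\<^bsub>A\<^esub> = h (\<zero>\<^bsub>A\<^esub> \<oplus>\<^bsub>A\<^esub> \<zero>\<^bsub>A\<^esub>)" by simp
    also have "\<dots> = h \<zero>\<^bsub>A\<^esub> \<oplus>\<^bsub>B\<^esub> h \<zero>\<^bsub>A\<^esub>" using assms(4) by blast
    finally show ?thesis using c by simp
  qed
  then show ?thesis using c B.add.l_cancel[of "h \<zero>\<^bsub>A\<^esub>" "h \<zero>\<^bsub>A\<^esub>" "\<zero>\<^bsub>B\<^esub>"] by simp
qed

lemma hom_finsum:
  assumes A: "abelian_group A" and B: "abelian_group B" and h: "h \<in> carrier A \<rightarrow> carrier B"
    and add: "\<forall>x \<in> carrier A. \<forall>y \<in> carrier A. h (x \<oplus>\<^bsub>A\<^esub> y) = h x \<oplus>\<^bsub>B\<^esub> h y"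
    and fin: "finite F"
  shows "f \<in> F \<rightarrow> carrier A \<Longrightarrow> h (finsum A f F) = finsum B (\<lambda>j. h (f j)) F"
  using fin
proof (induct F set: finite)
  case empty
  interpret A: abelian_group A by fact
  interpret B: abelian_group B by fact
  show ?case using hom_zero[OF A B h add] by simp
next
  case (insert a F)
  interpret A: abelian_group A by fact
  interpret B: abelian_group B by fact
  have fa: "f a \<in> carrier A" and fF: "f \<in> F \<rightarrow> carrier A" using insert by auto
  have hc: "(\<lambda>j. h (f j)) \<in> F \<rightarrow> carrier B" using fF h by (auto simp: Pi_def)
  have hfa: "h (f a) \<in> carrier B" using fa h by blast
  have "h (finsum A f (insert a F)) = h (f a \<oplus>\<^bsub>A\<^esub> finsum A f F)"
    using A.finsum_insert[OF insert(1,2) fF fa] by simp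
  also have "\<dots> = h (f a) \<oplus>\<^bsub>B\<^esub> h (finsum A f F)" using add fa A.finsum_closed[OF fF] by blast
  also have "\<dots> = h (f a) \<oplus>\<^bsub>B\<^esub> finsum B (\<lambda>j. h (f j)) F" using insert(3)[OF fF] by simp
  also have "\<dots> = finsum B (\<lambda>j. h (f j)) (insert a F)"
    using B.finsum_insert[OF insert(1,2) hc hfa] by simp
  finally show ?case .
qed



lemma gr_homD:
  assumes "gr_hom R A Ag B Bg f"
  shows "x \<in> carrier A \<Longrightarrow> f x \<in> carrier B"
    and "x \<in> carrier A \<Longrightarrow> y \<in> carrier A \<Longrightarrow> f (x \<oplus>\<^bsub>A\<^esub> y) = f x \<oplus>\<^bsub>B\<^esub> f y"
    and "r \<in> carrier R \<Longrightarrow> x \<in> carrier A \<Longrightarrow> f (r \<odot>\<^bsub>A\<^esub> x) = r \<odot>\<^bsub>B\<^esub> f x"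
    and "x \<in> Ag n \<Longrightarrow> f x \<in> Bg n"
  using assms unfolding gr_hom_def by blast+

locale setup8 =
  fixes R :: "'r ring" and Rg :: "int \<Rightarrow> 'r set" and P :: "'r set"
    and M :: "('r, 'm) module" and Mg :: "int \<Rightarrow> 'm set"
    and E :: "('r, 'e) module" and Eg :: "int \<Rightarrow> 'e set" and i :: "'r set \<Rightarrow> 'e"
  assumes gr: "graded_ring R Rg"
    and prime: "primeideal P R"
    and gm: "graded_module R Rg M Mg"
    and env: "gr_injective_envelope TYPE('m) R Rg (quot_module R P) (quot_grading R Rg P) E Eg i"
begin

lemma gmE: "graded_module R Rg E Eg"
  using env by (simp add: gr_injective_envelope_def gr_injective_def)

sublocale R: cring R using gr_cring[OF gr] .
sublocale P: primeideal P R using prime .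
sublocale M: module R M using gm_module[OF gm] .
sublocale E: module R E using gm_module[OF gmE] .

definition phi where "phi a = i (P +>\<^bsub>R\<^esub> a)"

lemma ihom: "gr_hom R (quot_module R P) (quot_grading R Rg P) E Eg i"
  using env by (simp add: gr_injective_envelope_def)
lemma iinj: "inj_on i (carrier (quot_module R P))"
  using env by (simp add: gr_injective_envelope_def)
lemma iess: "gr_essential R E Eg (i ` carrier (quot_module R P))"
  using env by (simp add: gr_injective_envelope_def)

lemma qcar: "carrier (quot_module R P) = a_rcosets\<^bsub>R\<^esub> P"
  by (simp add: quot_module_def FactRing_def)
lemma qadd: "add (quot_module R P) = set_add R"
  by (simp add: quot_module_def)
lemma qsmult: "smult (quot_module R P) = (\<lambda>a Ya. rcoset_mult R P (P +>\<^bsub>R\<^esub> a) Ya)"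
  by (simp add: quot_module_def a_r_coset_def)

lemma qin: "a \<in> carrier R \<Longrightarrow> P +>\<^bsub>R\<^esub> a \<in> carrier (quot_module R P)"
  unfolding qcar by (rule R.a_rcosetsI) (use P.a_subset in auto)

lemma icar: "Xa \<in> carrier (quot_module R P) \<Longrightarrow> i Xa \<in> carrier E"
  by (rule gr_homD(1)[OF ihom])

lemma iadd: "Xa \<in> carrier (quot_module R P) \<Longrightarrow> Ya \<in> carrier (quot_module R P) \<Longrightarrow>
   i (Xa \<oplus>\<^bsub>quot_module R P\<^esub> Ya) = i Xa \<oplus>\<^bsub>E\<^esub> i Ya"
  by (rule gr_homD(2)[OF ihom])
lemma ismult: "a \<in> carrier R \<Longrightarrow> Xa \<in> carrier (quot_module R P) \<Longrightarrow>
   i (a \<odot>\<^bsub>quot_module R P\<^esub> Xa) = a \<odot>\<^bsub>E\<^esub> i Xa"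
  by (rule gr_homD(3)[OF ihom])
lemma ideg: "Xa \<in> quot_grading R Rg P n \<Longrightarrow> i Xa \<in> Eg n"
  by (rule gr_homD(4)[OF ihom])

lemma phi_c: "a \<in> carrier R \<Longrightarrow> phi a \<in> carrier E"
  unfolding phi_def using icar qin by blast

lemma phi_add: "a \<in> carrier R \<Longrightarrow> b \<in> carrier R \<Longrightarrow> phi (a \<oplus>\<^bsub>R\<^esub> b) = phi a \<oplus>\<^bsub>E\<^esub> phi b"
proof -
  assume a: "a \<in> carrier R" and b: "b \<in> carrier R"
  have "phi a \<oplus>\<^bsub>E\<^esub> phi b = i ((P +>\<^bsub>R\<^esub> a) \<oplus>\<^bsub>quot_module R P\<^esub> (P +>\<^bsub>R\<^esub> b))"
    using iadd qin[OF a] qin[OF b] unfolding phi_def by simp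
  also have "\<dots> = phi (a \<oplus>\<^bsub>R\<^esub> b)" unfolding qadd phi_def using P.a_rcos_sum[OF a b] by simp
  finally show ?thesis by simp
qed

lemma phi_smult: "a \<in> carrier R \<Longrightarrow> b \<in> carrier R \<Longrightarrow> phi (a \<otimes>\<^bsub>R\<^esub> b) = a \<odot>\<^bsub>E\<^esub> phi b"
proof -
  assume a: "a \<in> carrier R" and b: "b \<in> carrier R"
  have "a \<odot>\<^bsub>E\<^esub> phi b = i (a \<odot>\<^bsub>quot_module R P\<^esub> (P +>\<^bsub>R\<^esub> b))"
    using ismult a qin[OF b] unfolding phi_def by simp
  also have "\<dots> = phi (a \<otimes>\<^bsub>R\<^esub> b)" unfolding qsmult phi_def using P.rcoset_mult_add[OF a b] by simp
  finally show ?thesis by simp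
qed

lemma rcosP: "P +>\<^bsub>R\<^esub> \<zero>\<^bsub>R\<^esub> = P"
  by (rule P.a_rcos_const) simp

lemma iP: "i P = \<zero>\<^bsub>E\<^esub>"
proof -
  have "phi \<zero>\<^bsub>R\<^esub> = phi (\<zero>\<^bsub>R\<^esub> \<oplus>\<^bsub>R\<^esub> \<zero>\<^bsub>R\<^esub>)" by (simp only: R.l_zero R.zero_closed)
  also have "\<dots> = phi \<zero>\<^bsub>R\<^esub> \<oplus>\<^bsub>E\<^esub> phi \<zero>\<^bsub>R\<^esub>" by (rule phi_add) auto
  finally have "phi \<zero>\<^bsub>R\<^esub> \<oplus>\<^bsub>E\<^esub> phi \<zero>\<^bsub>R\<^esub> = phi \<zero>\<^bsub>R\<^esub> \<oplus>\<^bsub>E\<^esub> \<zero>\<^bsub>E\<^esub>"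
    using phi_c[of "\<zero>\<^bsub>R\<^esub>"] by simp
  then have "phi \<zero>\<^bsub>R\<^esub> = \<zero>\<^bsub>E\<^esub>" using phi_c[of "\<zero>\<^bsub>R\<^esub>"] E.add.l_cancel
    by (metis E.zero_closed R.zero_closed)
  then show ?thesis using rcosP by (simp add: phi_def)
qed

lemma phi_zero_iff: "a \<in> carrier R \<Longrightarrow> phi a = \<zero>\<^bsub>E\<^esub> \<longleftrightarrow> a \<in> P"
proof
  assume a: "a \<in> carrier R" and z: "phi a = \<zero>\<^bsub>E\<^esub>"
  have "i (P +>\<^bsub>R\<^esub> a) = i (P +>\<^bsub>R\<^esub> \<zero>\<^bsub>R\<^esub>)" using z iP rcosP by (simp add: phi_def)
  then have "P +>\<^bsub>R\<^esub> a = P" using iinj qin[OF a] qin[of "\<zero>\<^bsub>R\<^esub>"] rcosP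
    by (metis R.zero_closed inj_onD)
  then show "a \<in> P" using P.a_rcos_self[OF a] by simp
next
  assume "a \<in> P"
  then show "phi a = \<zero>\<^bsub>E\<^esub>" using P.a_rcos_const iP by (simp add: phi_def)
qed

lemma phi_deg: "a \<in> Rg k \<Longrightarrow> phi a \<in> Eg k"
proof -
  assume "a \<in> Rg k"
  then have "P +>\<^bsub>R\<^esub> a \<in> quot_grading R Rg P k" by (auto simp: quot_grading_def)
  then show ?thesis using ideg unfolding phi_def by blast
qed

lemma iimg: "i ` carrier (quot_module R P) = phi ` carrier R"
proof -
  have "a_rcosets\<^bsub>R\<^esub> P = (\<lambda>a. P +>\<^bsub>R\<^esub> a) ` carrier R"
    unfolding A_RCOSETS_def a_r_coset_def RCOSETS_def by auto
  then show ?thesis unfolding qcar phi_def by (simp add: image_image)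
qed

end


context setup8 begin

abbreviation "S \<equiv> hS R Rg P"

lemma S_car: "s \<in> S \<Longrightarrow> s \<in> carrier R" by (simp add: hS_def)
lemma S_notP: "s \<in> S \<Longrightarrow> s \<notin> P" by (simp add: hS_def)

lemma one_S: "\<one>\<^bsub>R\<^esub> \<in> S"
  using one_deg0[OF gr] P.I_notcarr P.one_imp_carrier
  by (auto simp: hS_def homogeneous_def)

lemma S_mult: "s \<in> S \<Longrightarrow> t \<in> S \<Longrightarrow> s \<otimes>\<^bsub>R\<^esub> t \<in> S"
proof -
  assume s: "s \<in> S" and t: "t \<in> S"
  then obtain i j where si: "s \<in> Rg i" and tj: "t \<in> Rg j" and sc: "s \<in> carrier R" and tc: "t \<in> carrier R"
    and sP: "s \<notin> P" and tP: "t \<notin> P" by (auto simp: hS_def homogeneous_def)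
  have "s \<otimes>\<^bsub>R\<^esub> t \<in> Rg (i + j)" using gr_mult[OF gr si tj] .
  moreover have "s \<otimes>\<^bsub>R\<^esub> t \<notin> P" using P.I_prime[OF sc tc] sP tP by blast
  ultimately show ?thesis using sc tc by (auto simp: hS_def homogeneous_def)
qed

lemma M_comm: "a \<in> carrier R \<Longrightarrow> b \<in> carrier R \<Longrightarrow> x \<in> carrier M \<Longrightarrow>
   a \<odot>\<^bsub>M\<^esub> (b \<odot>\<^bsub>M\<^esub> x) = b \<odot>\<^bsub>M\<^esub> (a \<odot>\<^bsub>M\<^esub> x)"
  by (metis M.smult_assoc1 R.m_comm)

lemma M_minus: "a \<in> carrier R \<Longrightarrow> x \<in> carrier M \<Longrightarrow> y \<in> carrier M \<Longrightarrow>
   a \<odot>\<^bsub>M\<^esub> (x \<ominus>\<^bsub>M\<^esub> y) = a \<odot>\<^bsub>M\<^esub> x \<ominus>\<^bsub>M\<^esub> a \<odot>\<^bsub>M\<^esub> y"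
  by (simp add: a_minus_def M.smult_r_distr M.smult_r_minus)

lemma M_minus_eq0: "x \<in> carrier M \<Longrightarrow> y \<in> carrier M \<Longrightarrow> x \<ominus>\<^bsub>M\<^esub> y = \<zero>\<^bsub>M\<^esub> \<longleftrightarrow> x = y"
  by (metis M.add.inv_closed M.minus_equality M.r_neg a_minus_def M.add.inv_inv)

lemma zero_rel: "t \<in> carrier R \<Longrightarrow> s' \<in> carrier R \<Longrightarrow> m' \<in> carrier M \<Longrightarrow>
   t \<odot>\<^bsub>M\<^esub> (s' \<odot>\<^bsub>M\<^esub> \<zero>\<^bsub>M\<^esub> \<ominus>\<^bsub>M\<^esub> \<one>\<^bsub>R\<^esub> \<odot>\<^bsub>M\<^esub> m') = \<zero>\<^bsub>M\<^esub> \<longleftrightarrow> t \<odot>\<^bsub>M\<^esub> m' = \<zero>\<^bsub>M\<^esub>"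
  by (simp add: a_minus_def M.smult_r_minus)

lemma cls_mem: "(m', s') \<in> loc_class R M S m s \<longleftrightarrow>
   m \<in> carrier M \<and> m' \<in> carrier M \<and> s \<in> S \<and> s' \<in> S \<and>
      (\<exists>t \<in> S. t \<odot>\<^bsub>M\<^esub> ((s' \<odot>\<^bsub>M\<^esub> m) \<ominus>\<^bsub>M\<^esub> (s \<odot>\<^bsub>M\<^esub> m')) = \<zero>\<^bsub>M\<^esub>)"
  by (simp add: loc_class_def loc_rel_def)

lemma cls_refl: "m \<in> carrier M \<Longrightarrow> s \<in> S \<Longrightarrow> (m, s) \<in> loc_class R M S m s"
  unfolding cls_mem using S_car by (auto intro!: bexI[of _ s] simp: M.r_neg a_minus_def)

lemma cls_zero_mem: "(m', s') \<in> loc_class R M S \<zero>\<^bsub>M\<^esub> \<one>\<^bsub>R\<^esub> \<longleftrightarrow>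
   m' \<in> carrier M \<and> s' \<in> S \<and> (\<exists>t \<in> S. t \<odot>\<^bsub>M\<^esub> m' = \<zero>\<^bsub>M\<^esub>)"
proof -
  have e: "t \<odot>\<^bsub>M\<^esub> (s' \<odot>\<^bsub>M\<^esub> \<zero>\<^bsub>M\<^esub> \<ominus>\<^bsub>M\<^esub> \<one>\<^bsub>R\<^esub> \<odot>\<^bsub>M\<^esub> m') = \<zero>\<^bsub>M\<^esub> \<longleftrightarrow> t \<odot>\<^bsub>M\<^esub> m' = \<zero>\<^bsub>M\<^esub>"
    if "t \<in> S" "s' \<in> S" "m' \<in> carrier M" for t
    using zero_rel S_car that by blast
  show ?thesis unfolding cls_mem using e one_S by auto
qed

lemma cls_eq_zero:
  assumes m: "m \<in> carrier M" and s: "s \<in> S" and t0: "t0 \<in> S" and k: "t0 \<odot>\<^bsub>M\<^esub> m = \<zero>\<^bsub>M\<^esub>"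
  shows "loc_class R M S m s = loc_class R M S \<zero>\<^bsub>M\<^esub> \<one>\<^bsub>R\<^esub>"
proof (rule Set.set_eqI, rule iffI)
  fix p assume "p \<in> loc_class R M S m s"
  then obtain m' s' t where p: "p = (m', s')" and m': "m' \<in> carrier M" and s': "s' \<in> S" and t: "t \<in> S"
    and e: "t \<odot>\<^bsub>M\<^esub> ((s' \<odot>\<^bsub>M\<^esub> m) \<ominus>\<^bsub>M\<^esub> (s \<odot>\<^bsub>M\<^esub> m')) = \<zero>\<^bsub>M\<^esub>"
    by (cases p) (auto simp: cls_mem)
  have c: "t \<in> carrier R" "s \<in> carrier R" "s' \<in> carrier R" "t0 \<in> carrier R" using S_car t s s' t0 by auto
  have e2: "t \<odot>\<^bsub>M\<^esub> (s' \<odot>\<^bsub>M\<^esub> m) = t \<odot>\<^bsub>M\<^esub> (s \<odot>\<^bsub>M\<^esub> m')"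
    using e M_minus M_minus_eq0 c m m' by simp
  have "((t0 \<otimes>\<^bsub>R\<^esub> t) \<otimes>\<^bsub>R\<^esub> s) \<odot>\<^bsub>M\<^esub> m' = t0 \<odot>\<^bsub>M\<^esub> (t \<odot>\<^bsub>M\<^esub> (s \<odot>\<^bsub>M\<^esub> m'))"
    using c m' by (simp add: M.smult_assoc1)
  also have "\<dots> = t0 \<odot>\<^bsub>M\<^esub> (t \<odot>\<^bsub>M\<^esub> (s' \<odot>\<^bsub>M\<^esub> m))" using e2 by simp
  also have "\<dots> = t \<odot>\<^bsub>M\<^esub> (s' \<odot>\<^bsub>M\<^esub> (t0 \<odot>\<^bsub>M\<^esub> m))" using c m M_comm by (metis M.smult_closed)
  also have "\<dots> = \<zero>\<^bsub>M\<^esub>" using k c by simp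
  finally show "p \<in> loc_class R M S \<zero>\<^bsub>M\<^esub> \<one>\<^bsub>R\<^esub>"
    unfolding p cls_zero_mem using m' s' S_mult[OF S_mult[OF t0 t] s] by blast
next
  fix p assume "p \<in> loc_class R M S \<zero>\<^bsub>M\<^esub> \<one>\<^bsub>R\<^esub>"
  then obtain m' s' t where p: "p = (m', s')" and m': "m' \<in> carrier M" and s': "s' \<in> S" and t: "t \<in> S"
    and e: "t \<odot>\<^bsub>M\<^esub> m' = \<zero>\<^bsub>M\<^esub>"
    by (cases p) (auto simp: cls_zero_mem)
  have c: "t \<in> carrier R" "s \<in> carrier R" "s' \<in> carrier R" "t0 \<in> carrier R" using S_car t s s' t0 by auto
  have "(t0 \<otimes>\<^bsub>R\<^esub> t) \<odot>\<^bsub>M\<^esub> (s' \<odot>\<^bsub>M\<^esub> m) = t \<odot>\<^bsub>M\<^esub> (s' \<odot>\<^bsub>M\<^esub> (t0 \<odot>\<^bsub>M\<^esub> m))"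
    using c m M_comm by (simp add: M.smult_assoc1)
  also have "\<dots> = \<zero>\<^bsub>M\<^esub>" using k c by simp
  finally have 1: "(t0 \<otimes>\<^bsub>R\<^esub> t) \<odot>\<^bsub>M\<^esub> (s' \<odot>\<^bsub>M\<^esub> m) = \<zero>\<^bsub>M\<^esub>" .
  have "(t0 \<otimes>\<^bsub>R\<^esub> t) \<odot>\<^bsub>M\<^esub> (s \<odot>\<^bsub>M\<^esub> m') = t0 \<odot>\<^bsub>M\<^esub> (s \<odot>\<^bsub>M\<^esub> (t \<odot>\<^bsub>M\<^esub> m'))"
    using c m' M_comm by (simp add: M.smult_assoc1)
  also have "\<dots> = \<zero>\<^bsub>M\<^esub>" using e c by simp
  finally have 2: "(t0 \<otimes>\<^bsub>R\<^esub> t) \<odot>\<^bsub>M\<^esub> (s \<odot>\<^bsub>M\<^esub> m') = \<zero>\<^bsub>M\<^esub>" .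
  have "(t0 \<otimes>\<^bsub>R\<^esub> t) \<odot>\<^bsub>M\<^esub> ((s' \<odot>\<^bsub>M\<^esub> m) \<ominus>\<^bsub>M\<^esub> (s \<odot>\<^bsub>M\<^esub> m')) = \<zero>\<^bsub>M\<^esub>"
    using M_minus[of "t0 \<otimes>\<^bsub>R\<^esub> t"] 1 2 c m m' by (simp add: M_minus_eq0)
  then show "p \<in> loc_class R M S m s"
    unfolding p cls_mem using m m' s s' S_mult[OF t0 t] by blast
qed

end


context setup8 begin

lemma AGM: "abelian_group M" using module.axioms(2)[OF gm_module[OF gm]] .
lemma AGE: "abelian_group E" using module.axioms(2)[OF gm_module[OF gmE]] .
lemma AGR: "abelian_group R" using R.abelian_group_axioms .
lemma gdR: "graded_decomp R Rg" using gr_gd[OF gr] .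
lemma gdM: "graded_decomp M Mg" using gm_gd[OF gm] .
lemma gdE: "graded_decomp E Eg" using gm_gd[OF gmE] .

lemma phi_fs: "phi \<in> carrier R \<rightarrow> carrier E" using phi_c by blast
lemma phi_add': "\<forall>x\<in>carrier R. \<forall>y\<in>carrier R. phi (x \<oplus>\<^bsub>R\<^esub> y) = phi x \<oplus>\<^bsub>E\<^esub> phi y"
  using phi_add by blast

lemma finsum_nz:
  assumes "finsum E g F \<noteq> \<zero>\<^bsub>E\<^esub>" shows "\<exists>n\<in>F. g n \<noteq> \<zero>\<^bsub>E\<^esub>"
proof (rule ccontr)
  assume "\<not> (\<exists>n\<in>F. g n \<noteq> \<zero>\<^bsub>E\<^esub>)"
  then have z: "\<And>n. n \<in> F \<Longrightarrow> g n = \<zero>\<^bsub>E\<^esub>" by blast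
  have "finsum E g F = finsum E (\<lambda>n. \<zero>\<^bsub>E\<^esub>) F"
    by (rule E.finsum_cong') (use z in auto)
  also have "\<dots> = \<zero>\<^bsub>E\<^esub>" by (rule E.finsum_zero)
  finally show False using assms by blast
qed

lemma dirE:
  assumes LHS: "loc_deg R Rg M Mg S 0 = {loc_class R M S \<zero>\<^bsub>M\<^esub> \<one>\<^bsub>R\<^esub>}"
    and f: "gr_hom R M Mg E Eg f" and x: "x \<in> carrier M"
  shows "f x = \<zero>\<^bsub>E\<^esub>"
proof (rule ccontr)
  assume fx: "f x \<noteq> \<zero>\<^bsub>E\<^esub>"
  have fc: "f \<in> carrier M \<rightarrow> carrier E" and fadd: "\<forall>x\<in>carrier M. \<forall>y\<in>carrier M. f (x \<oplus>\<^bsub>M\<^esub> y) = f x \<oplus>\<^bsub>E\<^esub> f y"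
    and fsm: "\<And>r y. r \<in> carrier R \<Longrightarrow> y \<in> carrier M \<Longrightarrow> f (r \<odot>\<^bsub>M\<^esub> y) = r \<odot>\<^bsub>E\<^esub> f y"
    and fdeg: "\<And>n y. y \<in> Mg n \<Longrightarrow> f y \<in> Eg n"
    using f unfolding gr_hom_def by blast+
  have f0: "f \<zero>\<^bsub>M\<^esub> = \<zero>\<^bsub>E\<^esub>" using hom_zero[OF AGM AGE fc fadd] .
  obtain \<xi> Fx where finx: "finite Fx" and xi: "\<And>n. \<xi> n \<in> Mg n" and x0: "\<And>n. n \<notin> Fx \<Longrightarrow> \<xi> n = \<zero>\<^bsub>M\<^esub>"
    and xe: "x = finsum M \<xi> Fx" using gd_exists[OF gdM x] by blast
  have xic: "\<xi> n \<in> carrier M" for n using xi gd_sub[OF gdM] by blast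
  have "f x = finsum E (\<lambda>n. f (\<xi> n)) Fx" unfolding xe
    by (rule hom_finsum[OF AGM AGE fc fadd finx]) (use xic in auto)
  then obtain j where "f (\<xi> j) \<noteq> \<zero>\<^bsub>E\<^esub>"
    using fx finsum_nz[of "\<lambda>n. f (\<xi> n)" Fx] by auto
  define w where "w = \<xi> j"
  define v where "v = f w"
  have w: "w \<in> Mg j" and wc: "w \<in> carrier M" using xi xic by (auto simp: w_def)
  have v: "v \<in> Eg j" and vc: "v \<in> carrier E" and v0: "v \<noteq> \<zero>\<^bsub>E\<^esub>"
    using fdeg[OF w] fc wc \<open>f (\<xi> j) \<noteq> _\<close> by (auto simp: v_def w_def)
  define H where "H = {r \<odot>\<^bsub>E\<^esub> v | r. r \<in> carrier R}"
  have Hsub: "submodule H R E"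
  proof (rule E.submoduleI)
    show "H \<subseteq> carrier E" using vc by (auto simp: H_def)
    show "\<zero>\<^bsub>E\<^esub> \<in> H" unfolding H_def using vc by (auto intro!: exI[of _ "\<zero>\<^bsub>R\<^esub>"])
    show "\<ominus>\<^bsub>E\<^esub> a \<in> H" if "a \<in> H" for a
    proof -
      from that obtain r where r: "r \<in> carrier R" "a = r \<odot>\<^bsub>E\<^esub> v" unfolding H_def by blast
      then have "\<ominus>\<^bsub>E\<^esub> a = (\<ominus>\<^bsub>R\<^esub> r) \<odot>\<^bsub>E\<^esub> v" using vc by (simp add: E.smult_l_minus)
      then show ?thesis unfolding H_def using r by blast
    qed
    show "a \<oplus>\<^bsub>E\<^esub> b \<in> H" if "a \<in> H" "b \<in> H" for a b
    proof -
      from that obtain r r' where r: "r \<in> carrier R" "a = r \<odot>\<^bsub>E\<^esub> v" "r' \<in> carrier R" "b = r' \<odot>\<^bsub>E\<^esub> v"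
        unfolding H_def by blast
      then have "a \<oplus>\<^bsub>E\<^esub> b = (r \<oplus>\<^bsub>R\<^esub> r') \<odot>\<^bsub>E\<^esub> v" using vc by (simp add: E.smult_l_distr)
      then show ?thesis unfolding H_def using r by blast
    qed
    show "a \<odot>\<^bsub>E\<^esub> x \<in> H" if "a \<in> carrier R" "x \<in> H" for a x
    proof -
      from that obtain r where r: "r \<in> carrier R" "x = r \<odot>\<^bsub>E\<^esub> v" unfolding H_def by blast
      then have "a \<odot>\<^bsub>E\<^esub> x = (a \<otimes>\<^bsub>R\<^esub> r) \<odot>\<^bsub>E\<^esub> v" using vc that by (simp add: E.smult_assoc1)
      then show ?thesis unfolding H_def using r that by blast
    qed
  qed
  have decompH: "c = (\<lambda>m. if m - j \<in> Fr then \<rho> (m - j) \<odot>\<^bsub>E\<^esub> v else \<zero>\<^bsub>E\<^esub>)"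
    if "finite Fr" "\<And>n. \<rho> n \<in> Rg n" "finite F'" "\<And>n. c n \<in> Eg n" "\<And>n. n \<notin> F' \<Longrightarrow> c n = \<zero>\<^bsub>E\<^esub>"
      "finsum E c F' = finsum R \<rho> Fr \<odot>\<^bsub>E\<^esub> v" for c \<rho> Fr F'
    using smult_decomp[OF gmE that(1,2) v that(3-6)] .
  have Hgr: "graded_subset E Eg H"
    unfolding graded_subset_def
  proof (intro ballI allI impI)
    fix y c n
    assume y: "y \<in> H" and c: "(\<forall>n. c n \<in> Eg n) \<and> finite {n. c n \<noteq> \<zero>\<^bsub>E\<^esub>} \<and> y = finsum E c {n. c n \<noteq> \<zero>\<^bsub>E\<^esub>}"
    from y obtain r where r: "r \<in> carrier R" and yr: "y = r \<odot>\<^bsub>E\<^esub> v" unfolding H_def by blast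
    obtain \<rho> Fr where finr: "finite Fr" and rho: "\<And>n. \<rho> n \<in> Rg n"
      and re: "r = finsum R \<rho> Fr" using gd_exists[OF gdR r] by blast
    have c1: "\<And>n. c n \<in> Eg n" and c2: "finite {n. c n \<noteq> \<zero>\<^bsub>E\<^esub>}"
      and c3: "y = finsum E c {n. c n \<noteq> \<zero>\<^bsub>E\<^esub>}" using c by blast+
    have cz: "\<And>n. n \<notin> {n. c n \<noteq> \<zero>\<^bsub>E\<^esub>} \<Longrightarrow> c n = \<zero>\<^bsub>E\<^esub>" by blast
    have c4: "finsum E c {n. c n \<noteq> \<zero>\<^bsub>E\<^esub>} = finsum R \<rho> Fr \<odot>\<^bsub>E\<^esub> v"
      using c3 yr re by simp
    have cd: "c = (\<lambda>m. if m - j \<in> Fr then \<rho> (m - j) \<odot>\<^bsub>E\<^esub> v else \<zero>\<^bsub>E\<^esub>)"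
      by (rule decompH[OF finr rho c2 c1 cz c4])
    have rc: "\<rho> m \<in> carrier R" for m using rho gd_sub[OF gdR] by blast
    show "c n \<in> H"
    proof (cases "n - j \<in> Fr")
      case True
      then have "c n = \<rho> (n - j) \<odot>\<^bsub>E\<^esub> v" using fun_cong[OF cd, of n] by simp
      then show ?thesis unfolding H_def using rc by blast
    next
      case False
      then have "c n = \<zero>\<^bsub>E\<^esub>" using fun_cong[OF cd, of n] by simp
      then have "c n = \<zero>\<^bsub>R\<^esub> \<odot>\<^bsub>E\<^esub> v" using vc by simp
      then show ?thesis unfolding H_def using R.zero_closed by blast
    qed
  qed
  have "v = \<one>\<^bsub>R\<^esub> \<odot>\<^bsub>E\<^esub> v" using vc by simp
  then have vH: "v \<in> H" unfolding H_def by blast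
  have "\<zero>\<^bsub>E\<^esub> = \<zero>\<^bsub>R\<^esub> \<odot>\<^bsub>E\<^esub> v" using vc by simp
  then have zH: "\<zero>\<^bsub>E\<^esub> \<in> H" unfolding H_def by blast
  have "phi \<zero>\<^bsub>R\<^esub> = \<zero>\<^bsub>E\<^esub>" using phi_zero_iff[of "\<zero>\<^bsub>R\<^esub>"] by simp
  then have zN: "\<zero>\<^bsub>E\<^esub> \<in> phi ` carrier R" by (metis R.zero_closed image_eqI)
  have ess: "submodule H R E \<and> graded_subset E Eg H \<and> H \<inter> phi ` carrier R = {\<zero>\<^bsub>E\<^esub>} \<longrightarrow> H = {\<zero>\<^bsub>E\<^esub>}"
    using iess unfolding gr_essential_def iimg by (rule spec)
  have "H \<noteq> {\<zero>\<^bsub>E\<^esub>}" using vH v0 by blast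
  then have "H \<inter> phi ` carrier R \<noteq> {\<zero>\<^bsub>E\<^esub>}" using ess Hsub Hgr by blast
  then obtain y where yH: "y \<in> H" and yN: "y \<in> phi ` carrier R" and y0: "y \<noteq> \<zero>\<^bsub>E\<^esub>"
    using zH zN by blast
  from yH obtain r where r: "r \<in> carrier R" and yr: "y = r \<odot>\<^bsub>E\<^esub> v" unfolding H_def by blast
  from yN obtain a where a: "a \<in> carrier R" and ya: "y = phi a" by blast
  obtain \<rho> Fr where finr: "finite Fr" and rho: "\<And>n. \<rho> n \<in> Rg n" and "\<And>n. n \<notin> Fr \<Longrightarrow> \<rho> n = \<zero>\<^bsub>R\<^esub>"
    and re: "r = finsum R \<rho> Fr" using gd_exists[OF gdR r] by blast
  obtain \<alpha> Fa where fina: "finite Fa" and alpha: "\<And>n. \<alpha> n \<in> Rg n" and a0: "\<And>n. n \<notin> Fa \<Longrightarrow> \<alpha> n = \<zero>\<^bsub>R\<^esub>"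
    and ae: "a = finsum R \<alpha> Fa" using gd_exists[OF gdR a] by blast
  have alc: "\<alpha> n \<in> carrier R" for n using alpha gd_sub[OF gdR] by blast
  have rhc: "\<rho> n \<in> carrier R" for n using rho gd_sub[OF gdR] by blast
  have pa: "phi a = finsum E (\<lambda>n. phi (\<alpha> n)) Fa" unfolding ae
    by (rule hom_finsum[OF AGR AGE phi_fs phi_add' fina]) (use alc in auto)
  have ceq: "(\<lambda>n. phi (\<alpha> n)) = (\<lambda>m. if m - j \<in> Fr then \<rho> (m - j) \<odot>\<^bsub>E\<^esub> v else \<zero>\<^bsub>E\<^esub>)"
  proof (rule decompH[OF finr rho fina])
    show "phi (\<alpha> n) \<in> Eg n" for n using phi_deg alpha by blast
    show "n \<notin> Fa \<Longrightarrow> phi (\<alpha> n) = \<zero>\<^bsub>E\<^esub>" for n using a0 phi_zero_iff by simp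
    show "finsum E (\<lambda>n. phi (\<alpha> n)) Fa = finsum R \<rho> Fr \<odot>\<^bsub>E\<^esub> v" using pa ya yr re by simp
  qed
  obtain k where k: "phi (\<alpha> k) \<noteq> \<zero>\<^bsub>E\<^esub>"
    using pa ya y0 finsum_nz[of "\<lambda>n. phi (\<alpha> n)" Fa] by auto
  have kF: "k - j \<in> Fr" and pk: "phi (\<alpha> k) = \<rho> (k - j) \<odot>\<^bsub>E\<^esub> v"
    using fun_cong[OF ceq, of k] k by (auto split: if_splits)
  define a' where "a' = \<alpha> k"
  define r' where "r' = \<rho> (k - j)"
  have a'P: "a' \<notin> P" using k phi_zero_iff alc by (simp add: a'_def)
  have a'S: "a' \<in> S" using a'P alc alpha by (auto simp: hS_def homogeneous_def a'_def)
  have a'k: "a' \<in> Rg (0 + k)" using alpha by (simp add: a'_def)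
  define z where "z = r' \<odot>\<^bsub>M\<^esub> w"
  have zk: "z \<in> Mg (0 + k)" using gm_smult[OF gm rho w, of "k - j"] by (simp add: z_def r'_def)
  have zc: "z \<in> carrier M" using rhc wc by (simp add: z_def r'_def)
  have "loc_class R M S z a' \<in> loc_deg R Rg M Mg S 0"
    unfolding loc_deg_def mem_Collect_eq
    by (rule exI[of _ z], rule exI[of _ a'], rule exI[of _ k]) (use zk a'S a'k in simp)
  then have "loc_class R M S z a' = loc_class R M S \<zero>\<^bsub>M\<^esub> \<one>\<^bsub>R\<^esub>" using LHS by simp
  then have "(z, a') \<in> loc_class R M S \<zero>\<^bsub>M\<^esub> \<one>\<^bsub>R\<^esub>" using cls_refl[OF zc a'S] by simp
  then obtain t where t: "t \<in> S" and tz: "t \<odot>\<^bsub>M\<^esub> z = \<zero>\<^bsub>M\<^esub>" unfolding cls_zero_mem by blast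
  have tc: "t \<in> carrier R" using S_car t .
  have "phi (t \<otimes>\<^bsub>R\<^esub> a') = t \<odot>\<^bsub>E\<^esub> phi a'" using phi_smult tc alc by (simp add: a'_def)
  also have "\<dots> = t \<odot>\<^bsub>E\<^esub> (r' \<odot>\<^bsub>E\<^esub> f w)" using pk by (simp add: a'_def r'_def v_def)
  also have "\<dots> = f (t \<odot>\<^bsub>M\<^esub> z)" using fsm tc rhc wc by (simp add: z_def r'_def)
  also have "\<dots> = \<zero>\<^bsub>E\<^esub>" using tz f0 by simp
  finally have "t \<otimes>\<^bsub>R\<^esub> a' \<in> P" using phi_zero_iff tc alc by (simp add: a'_def)
  then show False using P.I_prime tc alc a'P S_notP[OF t] by (metis a'_def)
qed

end


context setup8 begin

lemma finsum_in_P: "finite F \<Longrightarrow> (\<And>j. j \<in> F \<Longrightarrow> \<rho> j \<in> P) \<Longrightarrow> finsum R \<rho> F \<in> P"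
proof (induct F rule: finite_induct)
  case empty then show ?case by simp
next
  case (insert a F)
  have pa: "\<rho> a \<in> P" using insert by blast
  have pc: "\<rho> \<in> F \<rightarrow> carrier R" using insert P.a_subset by blast
  have "finsum R \<rho> (insert a F) = \<rho> a \<oplus>\<^bsub>R\<^esub> finsum R \<rho> F"
    using R.finsum_insert[OF insert(1,2) pc] pa P.a_subset by blast
  then show ?case using insert pa by simp
qed

lemma ann_P:
  assumes m: "m \<in> Mg n" and nk: "\<And>t. t \<in> S \<Longrightarrow> t \<odot>\<^bsub>M\<^esub> m \<noteq> \<zero>\<^bsub>M\<^esub>"
    and a: "a \<in> carrier R" and am: "a \<odot>\<^bsub>M\<^esub> m = \<zero>\<^bsub>M\<^esub>"
  shows "a \<in> P"
proof -
  obtain \<rho> F where fin: "finite F" and rho: "\<And>n. \<rho> n \<in> Rg n"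
    and ae: "a = finsum R \<rho> F" using gd_exists[OF gdR a] by blast
  have rc: "\<rho> j \<in> carrier R" for j using rho gd_sub[OF gdR] by blast
  have c0: "\<And>k. k \<notin> {} \<Longrightarrow> (\<lambda>_. \<zero>\<^bsub>M\<^esub>) k = \<zero>\<^bsub>M\<^esub>" by simp
  have cE: "\<And>k. (\<lambda>_. \<zero>\<^bsub>M\<^esub>) k \<in> Mg k" using gd_zero[OF gdM] by simp
  have ceq: "finsum M (\<lambda>_. \<zero>\<^bsub>M\<^esub>) {} = finsum R \<rho> F \<odot>\<^bsub>M\<^esub> m" using am ae by simp
  have cd: "(\<lambda>_. \<zero>\<^bsub>M\<^esub>) = (\<lambda>k. if k - n \<in> F then \<rho> (k - n) \<odot>\<^bsub>M\<^esub> m else \<zero>\<^bsub>M\<^esub>)"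
    by (rule smult_decomp[OF gm fin rho m _ cE c0 ceq]) simp
  have "\<rho> j \<in> P" if j: "j \<in> F" for j
  proof (rule ccontr)
    assume "\<rho> j \<notin> P"
    then have "\<rho> j \<in> S" using rc rho by (auto simp: hS_def homogeneous_def)
    moreover have "\<rho> j \<odot>\<^bsub>M\<^esub> m = \<zero>\<^bsub>M\<^esub>" using fun_cong[OF cd, of "j + n"] j by simp
    ultimately show False using nk by blast
  qed
  then show ?thesis using finsum_in_P[OF fin] ae by simp
qed

lemma finsum_sub:
  assumes AG: "abelian_group (M\<lparr>carrier := H\<rparr>)" and fin: "finite F" and H: "H \<subseteq> carrier M"
  shows "f \<in> F \<rightarrow> H \<Longrightarrow> finsum (M\<lparr>carrier := H\<rparr>) f F = finsum M f F"
  using fin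
proof (induct F rule: finite_induct)
  case empty
  interpret A: abelian_group "M\<lparr>carrier := H\<rparr>" by fact
  show ?case by simp
next
  case (insert a F)
  interpret A: abelian_group "M\<lparr>carrier := H\<rparr>" by fact
  have fF: "f \<in> F \<rightarrow> carrier (M\<lparr>carrier := H\<rparr>)" and fa: "f a \<in> carrier (M\<lparr>carrier := H\<rparr>)"
    using insert(4) by auto
  have fF': "f \<in> F \<rightarrow> carrier M" and fa': "f a \<in> carrier M" using insert(4) H by auto
  have "finsum (M\<lparr>carrier := H\<rparr>) f (insert a F) = f a \<oplus>\<^bsub>M\<lparr>carrier := H\<rparr>\<^esub> finsum (M\<lparr>carrier := H\<rparr>) f F"
    by (rule A.finsum_insert[OF insert(1,2) fF fa])
  also have "\<dots> = f a \<oplus>\<^bsub>M\<^esub> finsum M f F" using insert(3) fF by simp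
  also have "\<dots> = finsum M f (insert a F)" by (rule M.finsum_insert[OF insert(1,2) fF' fa', symmetric])
  finally show ?case .
qed

end


context setup8 begin

lemma ginj: "gr_injective TYPE('m) R Rg E Eg"
  using env by (simp add: gr_injective_envelope_def)

lemma construct:
  assumes m: "m \<in> Mg n" and s: "s \<in> S" and sn: "s \<in> Rg n"
    and nk: "\<And>t. t \<in> S \<Longrightarrow> t \<odot>\<^bsub>M\<^esub> m \<noteq> \<zero>\<^bsub>M\<^esub>"
  shows "\<exists>h. gr_hom R M Mg E Eg h \<and> h m \<noteq> \<zero>\<^bsub>E\<^esub>"
proof -
  have mc: "m \<in> carrier M" using m gd_sub[OF gdM] by blast
  have sc: "s \<in> carrier R" using S_car[OF s] .
  define Rm where "Rm = {r \<odot>\<^bsub>M\<^esub> m | r. r \<in> carrier R}"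
  define A where "A = M\<lparr>carrier := Rm\<rparr>"
  define Ag where "Ag = (\<lambda>k. Rm \<inter> Mg k)"
  define g where "g = (\<lambda>y. phi ((SOME r. r \<in> carrier R \<and> y = r \<odot>\<^bsub>M\<^esub> m) \<otimes>\<^bsub>R\<^esub> s))"
  have g_eq: "g (r \<odot>\<^bsub>M\<^esub> m) = phi (r \<otimes>\<^bsub>R\<^esub> s)" if r: "r \<in> carrier R" for r
  proof -
    define r0 where "r0 = (SOME r'. r' \<in> carrier R \<and> r \<odot>\<^bsub>M\<^esub> m = r' \<odot>\<^bsub>M\<^esub> m)"
    have "r0 \<in> carrier R \<and> r \<odot>\<^bsub>M\<^esub> m = r0 \<odot>\<^bsub>M\<^esub> m"
      unfolding r0_def by (rule someI[of _ r]) (use r in simp)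
    then have r0: "r0 \<in> carrier R" and e: "r \<odot>\<^bsub>M\<^esub> m = r0 \<odot>\<^bsub>M\<^esub> m" by auto
    have "(r0 \<ominus>\<^bsub>R\<^esub> r) \<odot>\<^bsub>M\<^esub> m = r0 \<odot>\<^bsub>M\<^esub> m \<ominus>\<^bsub>M\<^esub> r \<odot>\<^bsub>M\<^esub> m"
      using r r0 mc by (simp add: R.minus_eq M.smult_l_distr M.smult_l_minus a_minus_def)
    also have "\<dots> = \<zero>\<^bsub>M\<^esub>" using e M_minus_eq0 r r0 mc by simp
    finally have "r0 \<ominus>\<^bsub>R\<^esub> r \<in> P" using ann_P[OF m nk] r r0 by simp
    then have "(r0 \<ominus>\<^bsub>R\<^esub> r) \<otimes>\<^bsub>R\<^esub> s \<in> P" using sc r r0 by (simp add: P.I_r_closed)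
    then have z: "phi ((r0 \<ominus>\<^bsub>R\<^esub> r) \<otimes>\<^bsub>R\<^esub> s) = \<zero>\<^bsub>E\<^esub>" using phi_zero_iff sc r r0 by simp
    have "r0 \<otimes>\<^bsub>R\<^esub> s = (r0 \<ominus>\<^bsub>R\<^esub> r) \<otimes>\<^bsub>R\<^esub> s \<oplus>\<^bsub>R\<^esub> r \<otimes>\<^bsub>R\<^esub> s"
      using r r0 sc by algebra
    then have "phi (r0 \<otimes>\<^bsub>R\<^esub> s) = phi ((r0 \<ominus>\<^bsub>R\<^esub> r) \<otimes>\<^bsub>R\<^esub> s) \<oplus>\<^bsub>E\<^esub> phi (r \<otimes>\<^bsub>R\<^esub> s)"
      using phi_add r r0 sc by simp
    then have "phi (r0 \<otimes>\<^bsub>R\<^esub> s) = phi (r \<otimes>\<^bsub>R\<^esub> s)" using z phi_c r sc by simp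
    moreover have "g (r \<odot>\<^bsub>M\<^esub> m) = phi (r0 \<otimes>\<^bsub>R\<^esub> s)" unfolding g_def r0_def by metis
    ultimately show ?thesis by simp
  qed
  have RmM: "Rm \<subseteq> carrier M" using mc by (auto simp: Rm_def)
  have subRm: "submodule Rm R M"
  proof (rule M.submoduleI)
    show "Rm \<subseteq> carrier M" by (rule RmM)
    have "\<zero>\<^bsub>M\<^esub> = \<zero>\<^bsub>R\<^esub> \<odot>\<^bsub>M\<^esub> m" using mc by simp
    then show "\<zero>\<^bsub>M\<^esub> \<in> Rm" unfolding Rm_def using R.zero_closed by blast
    show "\<ominus>\<^bsub>M\<^esub> a \<in> Rm" if "a \<in> Rm" for a
    proof -
      from that obtain r where r: "r \<in> carrier R" "a = r \<odot>\<^bsub>M\<^esub> m" unfolding Rm_def by blast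
      then have "\<ominus>\<^bsub>M\<^esub> a = (\<ominus>\<^bsub>R\<^esub> r) \<odot>\<^bsub>M\<^esub> m" using mc by (simp add: M.smult_l_minus)
      then show ?thesis unfolding Rm_def using r by blast
    qed
    show "a \<oplus>\<^bsub>M\<^esub> b \<in> Rm" if "a \<in> Rm" "b \<in> Rm" for a b
    proof -
      from that obtain r r' where r: "r \<in> carrier R" "a = r \<odot>\<^bsub>M\<^esub> m" "r' \<in> carrier R" "b = r' \<odot>\<^bsub>M\<^esub> m"
        unfolding Rm_def by blast
      then have "a \<oplus>\<^bsub>M\<^esub> b = (r \<oplus>\<^bsub>R\<^esub> r') \<odot>\<^bsub>M\<^esub> m" using mc by (simp add: M.smult_l_distr)
      then show ?thesis unfolding Rm_def using r by blast
    qed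
    show "a \<odot>\<^bsub>M\<^esub> x \<in> Rm" if "a \<in> carrier R" "x \<in> Rm" for a x
    proof -
      from that obtain r where r: "r \<in> carrier R" "x = r \<odot>\<^bsub>M\<^esub> m" unfolding Rm_def by blast
      then have "a \<odot>\<^bsub>M\<^esub> x = (a \<otimes>\<^bsub>R\<^esub> r) \<odot>\<^bsub>M\<^esub> m" using mc that by (simp add: M.smult_assoc1)
      then show ?thesis unfolding Rm_def using r that by blast
    qed
  qed
  have modA: "module R A" unfolding A_def by (rule submodule.submodule_is_module[OF subRm gm_module[OF gm]])
  have AGA: "abelian_group A" using module.axioms(2)[OF modA] .
  have cA: "carrier A = Rm" and addA: "Ring.ring.add A = Ring.ring.add M" and zA: "Ring.ring.zero A = Ring.ring.zero M" and smA: "Module.module.smult A = Module.module.smult M"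
    by (simp_all add: A_def)
  have fsA: "finsum A f F = finsum M f F" if "finite F" "f \<in> F \<rightarrow> Rm" for f F
    using finsum_sub[of Rm F f] AGA that RmM unfolding A_def by blast
  have RmE: "y \<in> Rm \<Longrightarrow> \<exists>r. r \<in> carrier R \<and> y = r \<odot>\<^bsub>M\<^esub> m" for y unfolding Rm_def by blast
  have rmRm: "r \<in> carrier R \<Longrightarrow> r \<odot>\<^bsub>M\<^esub> m \<in> Rm" for r unfolding Rm_def by blast
  have decRm: "\<exists>r'. r' \<in> Rg (k - n) \<and> y = r' \<odot>\<^bsub>M\<^esub> m" if y: "y \<in> Rm" "y \<in> Mg k" for y k
  proof -
    obtain r where r: "r \<in> carrier R" and yr: "y = r \<odot>\<^bsub>M\<^esub> m" using RmE[OF y(1)] by blast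
    obtain \<rho> Fr where finr: "finite Fr" and rho: "\<And>j. \<rho> j \<in> Rg j"
      and re: "r = finsum R \<rho> Fr" using gd_exists[OF gdR r] by blast
    define c where "c = (\<lambda>j. if j = k then y else \<zero>\<^bsub>M\<^esub>)"
    have yc: "y \<in> carrier M" using y RmM by blast
    have c1: "\<And>j. c j \<in> Mg j" using y gd_zero[OF gdM] by (simp add: c_def)
    have c2: "\<And>j. j \<notin> {k} \<Longrightarrow> c j = \<zero>\<^bsub>M\<^esub>" by (simp add: c_def)
    have c3: "finsum M c {k} = finsum R \<rho> Fr \<odot>\<^bsub>M\<^esub> m" using yc yr re by (simp add: c_def)
    have cd: "c = (\<lambda>j. if j - n \<in> Fr then \<rho> (j - n) \<odot>\<^bsub>M\<^esub> m else \<zero>\<^bsub>M\<^esub>)"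
      by (rule smult_decomp[OF gm finr rho m _ c1 c2 c3]) simp
    have yk: "y = (if k - n \<in> Fr then \<rho> (k - n) \<odot>\<^bsub>M\<^esub> m else \<zero>\<^bsub>M\<^esub>)"
      using fun_cong[OF cd, of k] by (simp add: c_def)
    show ?thesis
    proof (cases "k - n \<in> Fr")
      case True
      then have "y = \<rho> (k - n) \<odot>\<^bsub>M\<^esub> m" using yk by simp
      then show ?thesis using rho by blast
    next
      case False
      then have "y = \<zero>\<^bsub>R\<^esub> \<odot>\<^bsub>M\<^esub> m" using yk mc by simp
      then show ?thesis using gd_zero[OF gdR] by blast
    qed
  qed
  have gdA: "graded_decomp A Ag"
    unfolding graded_decomp_def
  proof (intro conjI allI ballI)
    fix k
    have s1: "subgroup Rm (add_monoid M)" using submodule.axioms(1)[OF subRm] .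
    have s2: "subgroup (Mg k) (add_monoid M)"
      using gdM unfolding graded_decomp_def by (meson additive_subgroup.a_subgroup)
    have s3: "subgroup (Rm \<inter> Mg k) (add_monoid M)" by (rule M.add.subgroups_Inter_pair[OF s1 s2])
    have s4: "subgroup (Rm \<inter> Mg k) ((add_monoid M)\<lparr>carrier := Rm\<rparr>)"
      by (rule M.add.subgroup_incl[OF s3 s1 Int_lower1])
    have eq: "add_monoid A = (add_monoid M)\<lparr>carrier := Rm\<rparr>" by (simp add: A_def)
    show "additive_subgroup (Ag k) A" unfolding Ag_def by (rule additive_subgroupI, subst eq, rule s4)
  next
    fix y assume yA: "y \<in> carrier A"
    then have yRm: "y \<in> Rm" by (simp add: cA)
    have yc: "y \<in> carrier M" using yRm RmM by blast
    obtain r where r: "r \<in> carrier R" and yr: "y = r \<odot>\<^bsub>M\<^esub> m" using RmE[OF yRm] by blast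
    obtain \<rho> Fr where finr: "finite Fr" and rho: "\<And>j. \<rho> j \<in> Rg j"
      and re: "r = finsum R \<rho> Fr" using gd_exists[OF gdR r] by blast
    obtain c F' where fin': "finite F'" and c1: "\<And>j. c j \<in> Mg j" and c2: "\<And>j. j \<notin> F' \<Longrightarrow> c j = \<zero>\<^bsub>M\<^esub>"
      and ye: "y = finsum M c F'" using gd_exists[OF gdM yc] by blast
    have c3: "finsum M c F' = finsum R \<rho> Fr \<odot>\<^bsub>M\<^esub> m" using ye yr re by simp
    have cd: "c = (\<lambda>j. if j - n \<in> Fr then \<rho> (j - n) \<odot>\<^bsub>M\<^esub> m else \<zero>\<^bsub>M\<^esub>)"
      by (rule smult_decomp[OF gm finr rho m fin' c1 c2 c3])
    have rhc: "\<rho> j \<in> carrier R" for j using rho gd_sub[OF gdR] by blast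
    have cRm: "c j \<in> Rm" for j
    proof (cases "j - n \<in> Fr")
      case True
      then have "c j = \<rho> (j - n) \<odot>\<^bsub>M\<^esub> m" using fun_cong[OF cd, of j] by simp
      then show ?thesis using rmRm[OF rhc] by simp
    next
      case False
      then have "c j = \<zero>\<^bsub>R\<^esub> \<odot>\<^bsub>M\<^esub> m" using fun_cong[OF cd, of j] mc by simp
      then show ?thesis using rmRm[OF R.zero_closed] by simp
    qed
    have cc: "c j \<in> carrier M" for j using cRm RmM by blast
    have sub: "{j. c j \<noteq> \<zero>\<^bsub>M\<^esub>} \<subseteq> F'" using c2 by blast
    have finS: "finite {j. c j \<noteq> \<zero>\<^bsub>M\<^esub>}" using fin' sub finite_subset by blast
    have ye2: "y = finsum M c {j. c j \<noteq> \<zero>\<^bsub>M\<^esub>}"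
      unfolding ye by (rule M.add.finprod_mono_neutral_cong_right) (use fin' sub cc in auto)
    define Q where "Q = (\<lambda>f. (\<forall>j. f j \<in> Mg j) \<and> finite {j. f j \<noteq> \<zero>\<^bsub>M\<^esub>}
        \<and> y = finsum M f {j. f j \<noteq> \<zero>\<^bsub>M\<^esub>})"
    have exQ: "\<exists>!f. Q f" using gdM yc unfolding graded_decomp_def Q_def by blast
    have Qc: "Q c" unfolding Q_def using c1 finS ye2 by blast
    have QA: "Q f" if f: "(\<forall>j. f j \<in> Ag j) \<and> finite {j. f j \<noteq> \<zero>\<^bsub>A\<^esub>}
        \<and> y = finsum A f {j. f j \<noteq> \<zero>\<^bsub>A\<^esub>}" for f
    proof -
      have f1: "\<And>j. f j \<in> Rm" "\<And>j. f j \<in> Mg j" using f by (auto simp: Ag_def)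
      have f2: "finite {j. f j \<noteq> \<zero>\<^bsub>M\<^esub>}" using f zA by simp
      have "y = finsum A f {j. f j \<noteq> \<zero>\<^bsub>M\<^esub>}" using f zA by simp
      also have "\<dots> = finsum M f {j. f j \<noteq> \<zero>\<^bsub>M\<^esub>}" by (rule fsA[OF f2]) (use f1 in auto)
      finally show ?thesis unfolding Q_def using f1 f2 by blast
    qed
    have cAv: "(\<forall>j. c j \<in> Ag j) \<and> finite {j. c j \<noteq> \<zero>\<^bsub>A\<^esub>}
        \<and> y = finsum A c {j. c j \<noteq> \<zero>\<^bsub>A\<^esub>}"
    proof (intro conjI allI)
      show "c j \<in> Ag j" for j using cRm c1 by (simp add: Ag_def)
      show "finite {j. c j \<noteq> \<zero>\<^bsub>A\<^esub>}" using finS zA by simp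
      have "finsum A c {j. c j \<noteq> \<zero>\<^bsub>M\<^esub>} = finsum M c {j. c j \<noteq> \<zero>\<^bsub>M\<^esub>}"
        by (rule fsA[OF finS]) (use cRm in auto)
      then show "y = finsum A c {j. c j \<noteq> \<zero>\<^bsub>A\<^esub>}" using ye2 zA by simp
    qed
    show "\<exists>!f. (\<forall>n. f n \<in> Ag n) \<and> finite {n. f n \<noteq> \<zero>\<^bsub>A\<^esub>}
        \<and> y = finsum A f {n. f n \<noteq> \<zero>\<^bsub>A\<^esub>}"
    proof (rule ex1I[of _ c])
      show "(\<forall>n. c n \<in> Ag n) \<and> finite {n. c n \<noteq> \<zero>\<^bsub>A\<^esub>} \<and> y = finsum A c {n. c n \<noteq> \<zero>\<^bsub>A\<^esub>}"
        by (rule cAv)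
      fix f assume "(\<forall>n. f n \<in> Ag n) \<and> finite {n. f n \<noteq> \<zero>\<^bsub>A\<^esub>} \<and> y = finsum A f {n. f n \<noteq> \<zero>\<^bsub>A\<^esub>}"
      then have "Q f" by (rule QA)
      then show "f = c" using exQ Qc by blast
    qed
  qed
  have gmA: "graded_module R Rg A Ag"
    unfolding graded_module_def
  proof (intro conjI allI ballI)
    show "graded_ring R Rg" by (rule gr)
    show "module R A" by (rule modA)
    show "graded_decomp A Ag" by (rule gdA)
    fix i j a x assume a: "a \<in> Rg i" and x: "x \<in> Ag j"
    have ac: "a \<in> carrier R" using a gd_sub[OF gdR] by blast
    have "a \<odot>\<^bsub>M\<^esub> x \<in> Rm" using x ac submodule.smult_closed[OF subRm] by (simp add: Ag_def)
    moreover have "a \<odot>\<^bsub>M\<^esub> x \<in> Mg (i + j)" using x gm_smult[OF gm a] by (simp add: Ag_def)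
    ultimately show "a \<odot>\<^bsub>A\<^esub> x \<in> Ag (i + j)" using smA by (simp add: Ag_def)
  qed
  have hu: "gr_hom R A Ag M Mg id"
    unfolding gr_hom_def using RmM by (auto simp: cA addA smA Ag_def)
  have gc: "g x \<in> carrier E" if xr: "x \<in> Rm" for x
  proof -
    obtain r where "r \<in> carrier R" "x = r \<odot>\<^bsub>M\<^esub> m" using RmE[OF xr] by blast
    then show ?thesis using g_eq phi_c sc by simp
  qed
  have hg: "gr_hom R A Ag E Eg g"
    unfolding gr_hom_def
  proof (intro conjI ballI allI)
    show "g \<in> carrier A \<rightarrow> carrier E" using gc cA by blast
    fix x y assume x: "x \<in> carrier A" and y: "y \<in> carrier A"
    obtain r where r: "r \<in> carrier R" "x = r \<odot>\<^bsub>M\<^esub> m" using RmE x cA by blast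
    obtain r' where r': "r' \<in> carrier R" "y = r' \<odot>\<^bsub>M\<^esub> m" using RmE y cA by blast
    have "x \<oplus>\<^bsub>A\<^esub> y = (r \<oplus>\<^bsub>R\<^esub> r') \<odot>\<^bsub>M\<^esub> m" using r r' mc addA by (simp add: M.smult_l_distr)
    then have "g (x \<oplus>\<^bsub>A\<^esub> y) = phi ((r \<oplus>\<^bsub>R\<^esub> r') \<otimes>\<^bsub>R\<^esub> s)" using g_eq r r' by simp
    also have "\<dots> = phi (r \<otimes>\<^bsub>R\<^esub> s \<oplus>\<^bsub>R\<^esub> r' \<otimes>\<^bsub>R\<^esub> s)" using r r' sc by (simp add: R.l_distr)
    also have "\<dots> = g x \<oplus>\<^bsub>E\<^esub> g y" using phi_add r r' sc g_eq by simp
    finally show "g (x \<oplus>\<^bsub>A\<^esub> y) = g x \<oplus>\<^bsub>E\<^esub> g y" .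
  next
    fix a x assume a: "a \<in> carrier R" and x: "x \<in> carrier A"
    obtain r where r: "r \<in> carrier R" "x = r \<odot>\<^bsub>M\<^esub> m" using RmE x cA by blast
    have "a \<odot>\<^bsub>A\<^esub> x = (a \<otimes>\<^bsub>R\<^esub> r) \<odot>\<^bsub>M\<^esub> m" using r a mc smA by (simp add: M.smult_assoc1)
    then have "g (a \<odot>\<^bsub>A\<^esub> x) = phi ((a \<otimes>\<^bsub>R\<^esub> r) \<otimes>\<^bsub>R\<^esub> s)" using g_eq r a by simp
    also have "\<dots> = phi (a \<otimes>\<^bsub>R\<^esub> (r \<otimes>\<^bsub>R\<^esub> s))" using r a sc by (simp add: R.m_assoc)
    also have "\<dots> = a \<odot>\<^bsub>E\<^esub> g x" using phi_smult r a sc g_eq by simp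
    finally show "g (a \<odot>\<^bsub>A\<^esub> x) = a \<odot>\<^bsub>E\<^esub> g x" .
  next
    fix k
    show "g ` Ag k \<subseteq> Eg k"
    proof
      fix z assume "z \<in> g ` Ag k"
      then obtain x where x: "x \<in> Rm" "x \<in> Mg k" and z: "z = g x" by (auto simp: Ag_def)
      obtain r' where r': "r' \<in> Rg (k - n)" "x = r' \<odot>\<^bsub>M\<^esub> m" using decRm[OF x] by blast
      have r'c: "r' \<in> carrier R" using r' gd_sub[OF gdR] by blast
      have "r' \<otimes>\<^bsub>R\<^esub> s \<in> Rg (k - n + n)" using gr_mult[OF gr r'(1) sn] .
      then have "phi (r' \<otimes>\<^bsub>R\<^esub> s) \<in> Eg k" using phi_deg by simp
      then show "z \<in> Eg k" using z r' g_eq r'c by simp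
    qed
  qed
  have ex: "\<exists>h. gr_hom R M Mg E Eg h \<and> (\<forall>x \<in> carrier A. h (id x) = g x)"
  proof -
    have "\<forall>(A :: ('r, 'm) module) Ag (B :: ('r, 'm) module) Bg u g.
        graded_module R Rg A Ag \<and> graded_module R Rg B Bg \<and>
        gr_hom R A Ag B Bg u \<and> inj_on u (carrier A) \<and> gr_hom R A Ag E Eg g \<longrightarrow>
        (\<exists>h. gr_hom R B Bg E Eg h \<and> (\<forall>x \<in> carrier A. h (u x) = g x))"
      using ginj unfolding gr_injective_def by (rule conjunct2)
    then have "graded_module R Rg A Ag \<and> graded_module R Rg M Mg \<and>
        gr_hom R A Ag M Mg id \<and> inj_on id (carrier A) \<and> gr_hom R A Ag E Eg g \<longrightarrow>
        (\<exists>h. gr_hom R M Mg E Eg h \<and> (\<forall>x \<in> carrier A. h (id x) = g x))"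
      by (elim allE)
    then show ?thesis using gmA gm hu hg by simp
  qed
  then obtain h where h: "gr_hom R M Mg E Eg h" and hx: "\<And>x. x \<in> carrier A \<Longrightarrow> h x = g x" by auto
  have "m = \<one>\<^bsub>R\<^esub> \<odot>\<^bsub>M\<^esub> m" using mc by simp
  then have "m \<in> carrier A" unfolding cA using rmRm[OF R.one_closed] by simp
  then have "h m = g (\<one>\<^bsub>R\<^esub> \<odot>\<^bsub>M\<^esub> m)" using hx mc by simp
  also have "\<dots> = phi s" using g_eq[OF R.one_closed] sc by simp
  finally have "h m = phi s" .
  moreover have "phi s \<noteq> \<zero>\<^bsub>E\<^esub>" using phi_zero_iff sc S_notP[OF s] by simp
  ultimately have "h m \<noteq> \<zero>\<^bsub>E\<^esub>" by simp
  with h show ?thesis by (intro exI[of _ h] conjI)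
qed

end


context setup8 begin

lemma dirD:
  assumes hz: "\<forall>f. gr_hom R M Mg E Eg f \<longrightarrow> (\<forall>x \<in> carrier M. f x = \<zero>\<^bsub>E\<^esub>)"
  shows "loc_deg R Rg M Mg S 0 = {loc_class R M S \<zero>\<^bsub>M\<^esub> \<one>\<^bsub>R\<^esub>}"
proof (rule Set.set_eqI, rule iffI)
  fix Xs assume "Xs \<in> loc_deg R Rg M Mg S 0"
  then obtain m s n where Xs: "Xs = loc_class R M S m s" and m: "m \<in> Mg (0 + n)" and s: "s \<in> S"
    and sn: "s \<in> Rg n" unfolding loc_deg_def by blast
  have m': "m \<in> Mg n" using m by simp
  have mc: "m \<in> carrier M" using m' gd_sub[OF gdM] by blast
  have "\<exists>t0\<in>S. t0 \<odot>\<^bsub>M\<^esub> m = \<zero>\<^bsub>M\<^esub>"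
  proof (rule ccontr)
    assume "\<not> (\<exists>t0\<in>S. t0 \<odot>\<^bsub>M\<^esub> m = \<zero>\<^bsub>M\<^esub>)"
    then have nk: "\<And>t. t \<in> S \<Longrightarrow> t \<odot>\<^bsub>M\<^esub> m \<noteq> \<zero>\<^bsub>M\<^esub>" by blast
    obtain h where h: "gr_hom R M Mg E Eg h" and hm: "h m \<noteq> \<zero>\<^bsub>E\<^esub>"
      using construct[OF m' s sn nk] by blast
    have "h m = \<zero>\<^bsub>E\<^esub>" using hz h mc by blast
    then show False using hm by simp
  qed
  then obtain t0 where "t0 \<in> S" "t0 \<odot>\<^bsub>M\<^esub> m = \<zero>\<^bsub>M\<^esub>" by blast
  then have "Xs = loc_class R M S \<zero>\<^bsub>M\<^esub> \<one>\<^bsub>R\<^esub>" using cls_eq_zero[OF mc s] Xs by simp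
  then show "Xs \<in> {loc_class R M S \<zero>\<^bsub>M\<^esub> \<one>\<^bsub>R\<^esub>}" by simp
next
  fix Xs assume "Xs \<in> {loc_class R M S \<zero>\<^bsub>M\<^esub> \<one>\<^bsub>R\<^esub>}"
  then have Xs: "Xs = loc_class R M S \<zero>\<^bsub>M\<^esub> \<one>\<^bsub>R\<^esub>" by simp
  have z: "\<zero>\<^bsub>M\<^esub> \<in> Mg (0 + 0)" using gd_zero[OF gdM] by simp
  show "Xs \<in> loc_deg R Rg M Mg S 0"
    unfolding loc_deg_def mem_Collect_eq Xs
    by (rule exI[of _ "\<zero>\<^bsub>M\<^esub>"], rule exI[of _ "\<one>\<^bsub>R\<^esub>"], rule exI[of _ 0])
       (use z one_S one_deg0[OF gr] in simp)
qed

end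

theorem mainTheorem8:
  fixes R :: "'r ring" and Rg :: "int \<Rightarrow> 'r set" and P :: "'r set"
    and M :: "('r, 'm) module" and Mg :: "int \<Rightarrow> 'm set"
    and E :: "('r, 'e) module" and Eg :: "int \<Rightarrow> 'e set" and i :: "'r set \<Rightarrow> 'e"
  assumes "graded_ring R Rg"
    and "primeideal P R" and "graded_subset R Rg P"
    and "graded_module R Rg M Mg"
    and "gr_injective_envelope TYPE('m) R Rg (quot_module R P) (quot_grading R Rg P) E Eg i"
  shows "loc_deg R Rg M Mg (hS R Rg P) 0 = {loc_class R M (hS R Rg P) \<zero>\<^bsub>M\<^esub> \<one>\<^bsub>R\<^esub>}
     \<longleftrightarrow> (\<forall>f. gr_hom R M Mg E Eg f \<longrightarrow> (\<forall>x \<in> carrier M. f x = \<zero>\<^bsub>E\<^esub>))"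
proof -
  interpret setup8 R Rg P M Mg E Eg i
    using assms(1,2,4,5) by (rule setup8.intro)
  show ?thesis
  proof (rule iffI)
    assume L: "loc_deg R Rg M Mg (hS R Rg P) 0 = {loc_class R M (hS R Rg P) \<zero>\<^bsub>M\<^esub> \<one>\<^bsub>R\<^esub>}"
    show "\<forall>f. gr_hom R M Mg E Eg f \<longrightarrow> (\<forall>x \<in> carrier M. f x = \<zero>\<^bsub>E\<^esub>)"
    proof (intro allI impI ballI)
      fix f x assume "gr_hom R M Mg E Eg f" "x \<in> carrier M"
      then show "f x = \<zero>\<^bsub>E\<^esub>" by (rule dirE[OF L])
    qed
  next
    assume "\<forall>f. gr_hom R M Mg E Eg f \<longrightarrow> (\<forall>x \<in> carrier M. f x = \<zero>\<^bsub>E\<^esub>)"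
    then show "loc_deg R Rg M Mg (hS R Rg P) 0 = {loc_class R M (hS R Rg P) \<zero>\<^bsub>M\<^esub> \<one>\<^bsub>R\<^esub>}"
      by (rule dirD)
  qed
qed


end
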